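(* Let $p,q$ be positive integers with $\frac1p+\frac1q=\frac12$. Let $M$ be a $\{p,q\}$-map of radius $0$ (i.e., all vertices of $M$ are exterior) and perimeter $n>0$. Then $\mathrm{Area}(M)\le\frac{q(n-2)}{2p}$.
   Context: A map is a finite, connected, simply connected 2-complex embedded in the plane; $\mathrm{Area}$ = number of faces; perimeter = length of the boundary path; degree of a vertex = number of oriented edges starting there, degree of a face = length of its boundary path. A $(p,q)$-map: every interior face has degree $\ge p$, every interior vertex has degree $\ge q$. A $\{p,q\}$-map is a $(p,q)$-map in which every face has degree at least $p$ and less than $2p$ and every vertex has degree less than $2q$. The radius is the maximal distance from a vertex to the boundary. *)

theory Defs
  imports Complex_Main "HOL-Combinatorics.Orbits" "HOL-Combinatorics.Permutations"
begin

text \<open>A (planar) map is encoded combinatorially: a finite nonempty set D of darts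
(oriented edges), a fixed-point-free involution alpha (reversal of orientation),
a permutation sigma (rotation of the darts leaving a vertex, i.e. vertices are
sigma-orbits), faces are orbits of phi = sigma o alpha (boundary paths), and one
distinguished dart ext lies on the boundary path of the exterior region.
Connectedness: sigma and alpha act transitively; planarity (sphere): Euler
formula V - E + F = 2, where F counts the exterior region as well.\<close>

definition face_perm :: "('a \<Rightarrow> 'a) \<Rightarrow> ('a \<Rightarrow> 'a) \<Rightarrow> 'a \<Rightarrow> 'a" where
  "face_perm alpha sigma = sigma \<circ> alpha"

definition map_vertices :: "'a set \<Rightarrow> ('a \<Rightarrow> 'a) \<Rightarrow> 'a set set" where
  "map_vertices D sigma = (\<lambda>x. orbit sigma x) ` D"

definition map_faces_all :: "'a set \<Rightarrow> ('a \<Rightarrow> 'a) \<Rightarrow> ('a \<Rightarrow> 'a) \<Rightarrow> 'a set set" where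
  "map_faces_all D alpha sigma = (\<lambda>x. orbit (face_perm alpha sigma) x) ` D"

definition ext_face :: "('a \<Rightarrow> 'a) \<Rightarrow> ('a \<Rightarrow> 'a) \<Rightarrow> 'a \<Rightarrow> 'a set" where
  "ext_face alpha sigma ext = orbit (face_perm alpha sigma) ext"

definition map_faces :: "'a set \<Rightarrow> ('a \<Rightarrow> 'a) \<Rightarrow> ('a \<Rightarrow> 'a) \<Rightarrow> 'a \<Rightarrow> 'a set set" where
  "map_faces D alpha sigma ext = map_faces_all D alpha sigma - {ext_face alpha sigma ext}"

definition planar_map :: "'a set \<Rightarrow> ('a \<Rightarrow> 'a) \<Rightarrow> ('a \<Rightarrow> 'a) \<Rightarrow> 'a \<Rightarrow> bool" where
  "planar_map D alpha sigma ext \<longleftrightarrow>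
     finite D \<and> D \<noteq> {} \<and> alpha permutes D \<and> sigma permutes D \<and>
     (\<forall>x\<in>D. alpha x \<noteq> x \<and> alpha (alpha x) = x) \<and>
     (\<forall>x\<in>D. \<forall>y\<in>D. (x, y) \<in> ({(z, sigma z) | z. z \<in> D} \<union> {(z, alpha z) | z. z \<in> D})\<^sup>*) \<and>
     ext \<in> D \<and>
     card (map_vertices D sigma) + card (map_faces_all D alpha sigma) = card D div 2 + 2"

definition area :: "'a set \<Rightarrow> ('a \<Rightarrow> 'a) \<Rightarrow> ('a \<Rightarrow> 'a) \<Rightarrow> 'a \<Rightarrow> nat" where
  "area D alpha sigma ext = card (map_faces D alpha sigma ext)"

definition perimeter :: "('a \<Rightarrow> 'a) \<Rightarrow> ('a \<Rightarrow> 'a) \<Rightarrow> 'a \<Rightarrow> nat" where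
  "perimeter alpha sigma ext = card (ext_face alpha sigma ext)"

text \<open>Degree of a vertex v (a sigma-orbit) = number of darts starting at v = card v;
degree of a face f = length of its boundary path = card f.\<close>
definition exterior_vertex :: "('a \<Rightarrow> 'a) \<Rightarrow> ('a \<Rightarrow> 'a) \<Rightarrow> 'a \<Rightarrow> 'a set \<Rightarrow> bool" where
  "exterior_vertex alpha sigma ext v \<longleftrightarrow> v \<inter> ext_face alpha sigma ext \<noteq> {}"

definition interior_vertices :: "'a set \<Rightarrow> ('a \<Rightarrow> 'a) \<Rightarrow> ('a \<Rightarrow> 'a) \<Rightarrow> 'a \<Rightarrow> 'a set set" where
  "interior_vertices D alpha sigma ext =
     {v \<in> map_vertices D sigma. \<not> exterior_vertex alpha sigma ext v}"

definition radius_zero :: "'a set \<Rightarrow> ('a \<Rightarrow> 'a) \<Rightarrow> ('a \<Rightarrow> 'a) \<Rightarrow> 'a \<Rightarrow> bool" where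
  "radius_zero D alpha sigma ext \<longleftrightarrow>
     (\<forall>v \<in> map_vertices D sigma. exterior_vertex alpha sigma ext v)"

definition pq_map :: "nat \<Rightarrow> nat \<Rightarrow> 'a set \<Rightarrow> ('a \<Rightarrow> 'a) \<Rightarrow> ('a \<Rightarrow> 'a) \<Rightarrow> 'a \<Rightarrow> bool" where
  "pq_map p q D alpha sigma ext \<longleftrightarrow>
     planar_map D alpha sigma ext \<and>
     (\<forall>f \<in> map_faces D alpha sigma ext. card f \<ge> p) \<and>
     (\<forall>v \<in> interior_vertices D alpha sigma ext. card v \<ge> q)"

definition curly_pq_map :: "nat \<Rightarrow> nat \<Rightarrow> 'a set \<Rightarrow> ('a \<Rightarrow> 'a) \<Rightarrow> ('a \<Rightarrow> 'a) \<Rightarrow> 'a \<Rightarrow> bool" where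
  "curly_pq_map p q D alpha sigma ext \<longleftrightarrow>
     pq_map p q D alpha sigma ext \<and>
     (\<forall>f \<in> map_faces D alpha sigma ext. p \<le> card f \<and> card f < 2 * p) \<and>
     (\<forall>v \<in> map_vertices D sigma. card v < 2 * q)"

end

theory Submission
  imports Defs
begin

lemma orbit_facts:
  assumes "f permutes S" "finite S"
  shows "z \<in> orbit f x \<Longrightarrow> orbit f z = orbit f x"
    and "x \<in> orbit f x"
    and "x \<in> S \<Longrightarrow> orbit f x \<subseteq> S"
proof -
  have c: "cyclic_on f (orbit f x)" by (rule cyclic_on_orbit[OF assms])
  show "z \<in> orbit f x \<Longrightarrow> orbit f z = orbit f x" by (rule orbit_cyclic_eq3[OF c])
  show "x \<in> orbit f x" using assms by (intro permutation_self_in_orbit) (auto simp: permutation_permutes)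
  show "x \<in> S \<Longrightarrow> orbit f x \<subseteq> S" by (rule permutes_orbit_subset[OF assms(1)])
qed

lemma orbit_disj:
  assumes "f permutes S" "finite S" "orbit f x \<noteq> orbit f y"
  shows "orbit f x \<inter> orbit f y = {}"
  using orbit_facts(1)[OF assms(1,2)] assms(3) by blast

lemma even_invol:
  "finite D \<Longrightarrow> (\<forall>x\<in>D. alpha x \<in> D \<and> alpha x \<noteq> x \<and> alpha (alpha x) = x) \<Longrightarrow> even (card D)"
proof (induction "card D" arbitrary: D rule: less_induct)
  case less
  show ?case
  proof (cases "D = {}")
    case True then show ?thesis by simp
  next
    case False
    then obtain x where x: "x \<in> D" by blast
    define D' where "D' = D - {x, alpha x}"
    have ax: "alpha x \<in> D" "alpha x \<noteq> x" using less.prems x by auto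
    have sub: "{x, alpha x} \<subseteq> D" using x ax by blast
    have "card {x, alpha x} \<le> card D" by (rule card_mono[OF less.prems(1) sub])
    then have cD: "card D = card D' + 2" using x ax less.prems(1) sub unfolding D'_def
      by (simp add: card_Diff_subset)
    have "\<forall>y\<in>D'. alpha y \<in> D' \<and> alpha y \<noteq> y \<and> alpha (alpha y) = y"
      using less.prems(2) x unfolding D'_def by (metis Diff_iff insert_iff singletonD)
    then have "even (card D')" using less.hyps[of D'] less.prems(1) cD unfolding D'_def by auto
    then show ?thesis using cD by simp
  qed
qed

theorem lemma2p11:
  fixes p q :: nat and D :: "'a set" and alpha sigma :: "'a \<Rightarrow> 'a" and ext :: 'a
  assumes "p > 0" and "q > 0"
    and "1 / real p + 1 / real q = 1 / 2"
    and "curly_pq_map p q D alpha sigma ext"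
    and "radius_zero D alpha sigma ext"
    and "perimeter alpha sigma ext > 0"
  shows "real (area D alpha sigma ext)
           \<le> real q * (real (perimeter alpha sigma ext) - 2) / (2 * real p)"
proof -
  define phi where "phi = face_perm alpha sigma"
  define F where "F = map_faces_all D alpha sigma"
  define E where "E = ext_face alpha sigma ext"
  define V where "V = map_vertices D sigma"
  define A where "A = area D alpha sigma ext"
  define n where "n = perimeter alpha sigma ext"
  have pl: "planar_map D alpha sigma ext" using assms(4) unfolding curly_pq_map_def pq_map_def by blast
  have fin: "finite D" and ap: "alpha permutes D" and sp: "sigma permutes D"
    and inv: "\<forall>x\<in>D. alpha x \<noteq> x \<and> alpha (alpha x) = x" and eD: "ext \<in> D"
    and eul: "card V + card F = card D div 2 + 2"
    using pl unfolding planar_map_def V_def F_def by auto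
  have php: "phi permutes D" unfolding phi_def face_perm_def using permutes_compose[OF ap sp] .
  have Fdef: "F = (\<lambda>x. orbit phi x) ` D" unfolding F_def map_faces_all_def phi_def by simp
  have Edef: "E = orbit phi ext" unfolding E_def ext_face_def phi_def by simp
  have EF: "E \<in> F" using Fdef Edef eD by blast
  have finF: "finite F" using Fdef fin by simp
  have UF: "\<Union>F = D" using orbit_facts[OF php fin] Fdef by blast
  have pw: "pairwise disjnt F" unfolding pairwise_def disjnt_def Fdef
    using orbit_disj[OF php fin] by blast
  have finmem: "\<forall>X\<in>F. finite X" using UF fin by (meson Sup_upper finite_subset)
  have cardD: "card D = sum card F" using card_Union_disjoint[OF pw] finmem UF by simp
  have areaF: "A = card (F - {E})" unfolding A_def area_def map_faces_def F_def E_def by simp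
  have faces_ge: "\<forall>f\<in>F - {E}. card f \<ge> p"
    using assms(4) unfolding curly_pq_map_def pq_map_def map_faces_def F_def E_def by blast
  have "sum card F = card E + sum card (F - {E})" using EF finF by (simp add: sum.remove)
  moreover have "sum card (F - {E}) \<ge> p * A"
    using sum_bounded_below[of "F - {E}" p card] faces_ge areaF by (simp add: mult.commute)
  ultimately have s1: "p * A + n \<le> card D" using cardD unfolding n_def perimeter_def E_def[symmetric] by linarith
  have cF: "card F = A + 1" using areaF EF finF by (simp add: card_Suc_Diff1 del: card_Diff_insert)
  have "\<forall>x\<in>D. alpha x \<in> D \<and> alpha x \<noteq> x \<and> alpha (alpha x) = x"
    using inv ap by (simp add: permutes_in_image)
  then have ev: "even (card D)" by (rule even_invol[OF fin])
  \<comment> \<open>vertices inject into exterior darts\<close>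
  have Vdef: "V = (\<lambda>x. orbit sigma x) ` D" unfolding V_def map_vertices_def by simp
  have vE: "\<forall>v\<in>V. v \<inter> E \<noteq> {}" using assms(5) unfolding radius_zero_def exterior_vertex_def V_def E_def by blast
  define g where "g v = (SOME d. d \<in> v \<inter> E)" for v
  have gv: "g v \<in> v \<inter> E" if "v \<in> V" for v using vE that unfolding g_def by (meson all_not_in_conv someI_ex)
  have "inj_on g V"
  proof (rule inj_onI)
    fix v w assume "v \<in> V" "w \<in> V" "g v = g w"
    then obtain x y where "v = orbit sigma x" "w = orbit sigma y" using Vdef by blast
    have "g v \<in> v" "g v \<in> w" using gv[OF \<open>v \<in> V\<close>] gv[OF \<open>w \<in> V\<close>] \<open>g v = g w\<close> by auto
    then have "v \<inter> w \<noteq> {}" by blast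
    then show "v = w" using orbit_disj[OF sp fin, of x y] \<open>v = orbit sigma x\<close> \<open>w = orbit sigma y\<close> by blast
  qed
  moreover have "g ` V \<subseteq> E" using gv by blast
  moreover have "finite E" using EF finmem by blast
  ultimately have cV: "card V \<le> n" unfolding n_def perimeter_def E_def[symmetric]
    using card_inj_on_le by blast
  have key: "p * A + n + 2 \<le> 2 * n + 2 * A"
    using s1 cF eul cV ev by (auto elim!: evenE)
  have key': "real p * A + n + 2 \<le> 2 * n + 2 * A" proof -
    have "real (p * A + n + 2) \<le> real (2 * n + 2 * A)" using key by (rule of_nat_mono)
    then show ?thesis by simp
  qed
  have pqr: "real q * (real p - 2) = 2 * real p" using assms(1,2,3) by (simp add: field_simps)
  have "2 * real p * A = real q * ((real p - 2) * A)" using pqr by (simp add: algebra_simps)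
  also have "\<dots> \<le> real q * (real n - 2)" using key' by (intro mult_left_mono) (auto simp: algebra_simps)
  finally have "2 * real p * A \<le> real q * (real n - 2)" .
  then have "real A \<le> real q * (real n - 2) / (2 * real p)" using assms(1)
    by (subst pos_le_divide_eq) (auto simp: mult.commute)
  then show ?thesis unfolding A_def n_def .
qed

end
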